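(* Let $U$ be a commutative supertropical monoid with distinguished idempotent $e$. Then $U$ is a semiring (with respect to the addition defined below) if and only if the following condition holds: (Dis) for all $x,y,z\in U$: if $0<ex<ey$ and $exz=eyz$, then $yz=eyz$ (i.e. $yz\in eU$). In this case the semiring $U$ is a supertropical semiring.
   Context: A bipotent semiring is a commutative monoid $(M,\cdot)$ with absorbing element $0$, equipped with a total order compatible with multiplication ($x\le y\Rightarrow xz\le yz$) in which $0$ is the least element; its addition is $x+y=\max(x,y)$. A supertropical monoid is a monoid $(U,\cdot)$ with an absorbing element $0$ and a distinguished central idempotent $e$ such that $ex=0$ implies $x=0$, together with a total ordering on the submonoid $M:=eU$ compatible with multiplication, making $M$ a bipotent semiring (the ghost ideal). On a supertropical monoid $U$ define the addition $x+y:=y$ if $ex<ey$, $x+y:=x$ if $ex>ey$, and $x+y:=ex$ if $ex=ey$. One says $U$ "is a semiring" if this addition is associative and multiplication distributes over it. A supertropical semiring is a semiring $U$ in which $e:=1+1$ is idempotent, $eU$ is bipotent (sums of elements of $eU$ lie in $\{x,y\}$), and for all $x,y$: $x+y=ex$ if $ex=ey$, and $x+y\in\{x,y\}$ otherwise. *)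

theory Defs
  imports Main
begin

text \<open>The distinguished idempotent
is e, and le is a total order on the ghost ideal M = eU (its values outside M are irrelevant).\<close>

definition ghost :: "'a::{comm_monoid_mult,mult_zero} \<Rightarrow> 'a set" where
  "ghost e = range (\<lambda>x. e * x)"

definition comm_supertropical_monoid ::
  "'a::{comm_monoid_mult,mult_zero} \<Rightarrow> ('a \<Rightarrow> 'a \<Rightarrow> bool) \<Rightarrow> bool" where
  "comm_supertropical_monoid e le \<longleftrightarrow>
     e * e = e \<and>
     (\<forall>x. e * x = 0 \<longrightarrow> x = 0) \<and>
     (\<forall>x\<in>ghost e. le x x) \<and>
     (\<forall>x\<in>ghost e. \<forall>y\<in>ghost e. le x y \<and> le y x \<longrightarrow> x = y) \<and>
     (\<forall>x\<in>ghost e. \<forall>y\<in>ghost e. \<forall>z\<in>ghost e. le x y \<and> le y z \<longrightarrow> le x z) \<and>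
     (\<forall>x\<in>ghost e. \<forall>y\<in>ghost e. le x y \<or> le y x) \<and>
     (\<forall>x\<in>ghost e. \<forall>y\<in>ghost e. \<forall>z\<in>ghost e. le x y \<longrightarrow> le (x * z) (y * z)) \<and>
     (\<forall>x\<in>ghost e. le 0 x)"

definition st_less :: "('a \<Rightarrow> 'a \<Rightarrow> bool) \<Rightarrow> 'a \<Rightarrow> 'a \<Rightarrow> bool" where
  "st_less le x y \<longleftrightarrow> le x y \<and> x \<noteq> y"

definition st_add ::
  "'a::{comm_monoid_mult,mult_zero} \<Rightarrow> ('a \<Rightarrow> 'a \<Rightarrow> bool) \<Rightarrow> 'a \<Rightarrow> 'a \<Rightarrow> 'a" where
  "st_add e le x y =
     (if st_less le (e * x) (e * y) then y
      else if st_less le (e * y) (e * x) then x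
      else e * x)"

definition st_is_semiring ::
  "'a::{comm_monoid_mult,mult_zero} \<Rightarrow> ('a \<Rightarrow> 'a \<Rightarrow> bool) \<Rightarrow> bool" where
  "st_is_semiring e le \<longleftrightarrow>
     (\<forall>x y z. st_add e le (st_add e le x y) z = st_add e le x (st_add e le y z)) \<and>
     (\<forall>x y z. z * st_add e le x y = st_add e le (z * x) (z * y)) \<and>
     (\<forall>x y z. st_add e le x y * z = st_add e le (x * z) (y * z))"

definition st_supertropical_semiring ::
  "'a::{comm_monoid_mult,mult_zero} \<Rightarrow> ('a \<Rightarrow> 'a \<Rightarrow> bool) \<Rightarrow> bool" where
  "st_supertropical_semiring e le \<longleftrightarrow>
     st_is_semiring e le \<and>
     (let e' = st_add e le 1 1 in
        e' * e' = e' \<and>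
        (\<forall>x\<in>ghost e'. \<forall>y\<in>ghost e'. st_add e le x y \<in> {x, y}) \<and>
        (\<forall>x y. e' * x = e' * y \<longrightarrow> st_add e le x y = e' * x) \<and>
        (\<forall>x y. e' * x \<noteq> e' * y \<longrightarrow> st_add e le x y \<in> {x, y}))"

definition cond_Dis ::
  "'a::{comm_monoid_mult,mult_zero} \<Rightarrow> ('a \<Rightarrow> 'a \<Rightarrow> bool) \<Rightarrow> bool" where
  "cond_Dis e le \<longleftrightarrow>
     (\<forall>x y z. st_less le 0 (e * x) \<and> st_less le (e * x) (e * y) \<and> e * x * z = e * y * z
        \<longrightarrow> y * z = e * y * z)"

end

theory Submission
  imports Defs
begin

locale stm =
  fixes e :: "'a::{comm_monoid_mult,mult_zero}" and le :: "'a \<Rightarrow> 'a \<Rightarrow> bool"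
  assumes A: "comm_supertropical_monoid e le"
begin

lemma ee[simp]: "e * (e * x) = e * x"
  using A unfolding comm_supertropical_monoid_def by (metis mult.assoc)

lemma gh[simp]: "e * x \<in> ghost e" unfolding ghost_def by auto

lemma trich: "st_less le (e*x) (e*y) \<or> st_less le (e*y) (e*x) \<or> e*x = e*y"
proof -
  have "le (e*x) (e*y) \<or> le (e*y) (e*x)"
    using A unfolding comm_supertropical_monoid_def by (meson gh)
  thus ?thesis unfolding st_less_def by metis
qed

lemma asym: "st_less le (e*x) (e*y) \<Longrightarrow> \<not> st_less le (e*y) (e*x) \<and> e*x \<noteq> e*y"
  using A unfolding comm_supertropical_monoid_def st_less_def by (meson gh)

lemma trans: "st_less le (e*x) (e*y) \<Longrightarrow> st_less le (e*y) (e*z) \<Longrightarrow> st_less le (e*x) (e*z)"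
proof -
  assume h1: "st_less le (e*x) (e*y)" and h2: "st_less le (e*y) (e*z)"
  have tr: "\<forall>a\<in>ghost e. \<forall>b\<in>ghost e. \<forall>c\<in>ghost e. le a b \<and> le b c \<longrightarrow> le a c"
   and an: "\<forall>a\<in>ghost e. \<forall>b\<in>ghost e. le a b \<and> le b a \<longrightarrow> a = b"
    using A unfolding comm_supertropical_monoid_def by blast+
  have "le (e*x) (e*z)" using tr h1 h2 gh unfolding st_less_def by blast
  moreover have "e*x \<noteq> e*z"
  proof
    assume "e*x = e*z"
    hence "le (e*z) (e*y)" using h1 unfolding st_less_def by simp
    hence "e*y = e*z" using an h2 gh unfolding st_less_def by blast
    thus False using h2 unfolding st_less_def by simp
  qed
  ultimately show ?thesis unfolding st_less_def by simp
qed

lemma add_lt: "st_less le (e*x) (e*y) \<Longrightarrow> st_add e le x y = y"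
  unfolding st_add_def by simp

lemma add_gt: "st_less le (e*y) (e*x) \<Longrightarrow> st_add e le x y = x"
  unfolding st_add_def using asym by auto

lemma add_eq: "e*x = e*y \<Longrightarrow> st_add e le x y = e*x"
  unfolding st_add_def st_less_def by simp

lemma assoc: "st_add e le (st_add e le x y) z = st_add e le x (st_add e le y z)"
proof -
  have t1: "st_less le (e*x) (e*y) \<or> st_less le (e*y) (e*x) \<or> e*x = e*y" by (rule trich)
  have t2: "st_less le (e*y) (e*z) \<or> st_less le (e*z) (e*y) \<or> e*y = e*z" by (rule trich)
  have t3: "st_less le (e*x) (e*z) \<or> st_less le (e*z) (e*x) \<or> e*x = e*z" by (rule trich)
  show ?thesis
    using t1 t2 t3
    by (elim disjE; simp add: add_lt add_gt add_eq; metis trans asym add_lt add_gt add_eq ee)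
qed

lemma mono: "le (e*x) (e*y) \<Longrightarrow> le (e*x*z) (e*y*z)"
proof -
  assume h: "le (e*x) (e*y)"
  have "le (e*x*(e*z)) (e*y*(e*z))" using A h unfolding comm_supertropical_monoid_def by (meson gh)
  moreover have "e*x*(e*z) = e*x*z" "e*y*(e*z) = e*y*z"
    by (metis ee mult.assoc mult.commute)+
  ultimately show ?thesis by simp
qed

lemma zero_or_pos: "e*x = 0 \<or> st_less le 0 (e*x)"
proof -
  have "le 0 (e*x)" using A unfolding comm_supertropical_monoid_def by (meson gh)
  thus ?thesis unfolding st_less_def by auto
qed

lemma distrib:
  assumes D: "cond_Dis e le"
  shows "z * st_add e le x y = st_add e le (z*x) (z*y)"
proof -
  have k: "st_add e le (z*x) (z*y) = z*y" if lt: "st_less le (e*x) (e*y)" for x y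
  proof -
    have "le (e*x*z) (e*y*z)" using mono lt unfolding st_less_def by blast
    hence l: "le (e*(z*x)) (e*(z*y))" by (simp add: ac_simps)
    show ?thesis
    proof (cases "e*(z*x) = e*(z*y)")
      case False
      thus ?thesis using l by (simp add: add_lt st_less_def)
    next
      case True
      have "z*y = e*(z*y)"
      proof (cases "e*x = 0")
        case True
        hence "x = 0" using A unfolding comm_supertropical_monoid_def by blast
        hence "e*(z*y) = 0" using \<open>e*(z*x) = e*(z*y)\<close> by simp
        hence "z*y = 0" using A unfolding comm_supertropical_monoid_def by blast
        thus ?thesis by simp
      next
        case False
        hence "st_less le 0 (e*x)" using zero_or_pos by blast
        moreover have "e*x*z = e*y*z" using True by (simp add: ac_simps)
        ultimately have "y*z = e*y*z" using D lt unfolding cond_Dis_def by blast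
        thus ?thesis by (simp add: ac_simps)
      qed
      thus ?thesis using True add_eq by metis
    qed
  qed
  from trich[of x y] show ?thesis
  proof (elim disjE)
    assume "st_less le (e*x) (e*y)" thus ?thesis using k add_lt by metis
  next
    assume h: "st_less le (e*y) (e*x)"
    have "st_add e le (z*y) (z*x) = z*x" using k[OF h] .
    moreover have "st_add e le (z*x) (z*y) = st_add e le (z*y) (z*x)"
      using trich[of "z*x" "z*y"] asym add_lt add_gt add_eq by metis
    ultimately show ?thesis using add_gt h by metis
  next
    assume h: "e*x = e*y"
    hence "e*(z*x) = e*(z*y)" by (metis mult.assoc mult.commute)
    thus ?thesis using h add_eq by (metis mult.assoc mult.commute)
  qed
qed

end

theorem theorem1p2:
  fixes e :: "'a::{comm_monoid_mult,mult_zero}" and le :: "'a \<Rightarrow> 'a \<Rightarrow> bool"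
  assumes "comm_supertropical_monoid e le"
  shows "(st_is_semiring e le \<longleftrightarrow> cond_Dis e le) \<and>
         (st_is_semiring e le \<longrightarrow> st_supertropical_semiring e le)"
proof -
  interpret stm e le by (rule stm.intro[OF assms])
  have dir1: "cond_Dis e le" if S: "st_is_semiring e le"
    unfolding cond_Dis_def
  proof (intro allI impI, elim conjE)
    fix x y z
    assume lt: "st_less le (e*x) (e*y)" and eq: "e*x*z = e*y*z"
    have "st_add e le x y * z = st_add e le (x*z) (y*z)" using S unfolding st_is_semiring_def by blast
    moreover have "st_add e le x y = y" using add_lt lt by blast
    moreover have "st_add e le (x*z) (y*z) = e*(x*z)" using add_eq eq by (simp add: ac_simps)
    ultimately show "y*z = e*y*z" using eq by (simp add: ac_simps)
  qed
  have dir2: "st_is_semiring e le" if D: "cond_Dis e le"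
    unfolding st_is_semiring_def using assoc distrib[OF D] by (metis mult.commute)
  have e1: "st_add e le 1 1 = e" using add_eq[of 1 1] by simp
  have st: "st_supertropical_semiring e le" if S: "st_is_semiring e le"
    unfolding st_supertropical_semiring_def Let_def e1
  proof (intro conjI S ballI allI impI)
    show "e*e = e" using ee[of 1] by simp
  next
    fix x y assume "x \<in> ghost e" "y \<in> ghost e"
    then obtain a b where "x = e*a" "y = e*b" unfolding ghost_def by auto
    thus "st_add e le x y \<in> {x, y}"
      using trich[of x y] add_lt add_gt add_eq by (metis ee insertI1 insertI2 singletonI)
  next
    fix x y assume "e*x = e*y" thus "st_add e le x y = e*x" by (rule add_eq)
  next
    fix x y assume "e*x \<noteq> e*y" thus "st_add e le x y \<in> {x, y}"
      using trich[of x y] add_lt add_gt by auto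
  qed
  show ?thesis using dir1 dir2 st by blast
qed

end
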